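(* Assume the set $\mathcal{E}_1=\{u_1<u_2<\cdots\}$ and $\mathcal{E}_3=\{v_1<v_2<\cdots\}$ are both infinite and that $n_\ell>64$ for all $\ell$. Let $k\ge2$ be an integer. For $1\le m\le 8k-4$ write $m=8q+r$ where $0\le q\le k-2$, $1\le r\le 8$ if $m\le 8k-8$, and $q=k-1$, $1\le r\le 4$ if $8k-7\le m\le 8k-4$. Then there exist strictly increasing sequences of nonnegative integers $x_0<x_1<\dots<x_{8k-4}$ and $y_0<y_1<\dots<y_{8k-4}$ with $x_0=y_0=0$ such that every integer $X$ satisfying the system of congruences \[ X\equiv 0\pmod 4,\qquad X+m\equiv 0\ \Bigl(\bmod\ \prod_{x_{m-1}<n\le x_m}u_n\cdot\prod_{y_{m-1}<n\le y_m}v_n\Bigr)\quad(1\le m\le 8k-4) \] has the following two properties: (C1) for $1\le m\le 8k-8$, $X+m$ is divisible by exactly $2^q$ of the integers $u_n$ with $n\le x_m$ and by exactly $2^q$ of the integers $v_n$ with $n\le y_m$; (C2) for $8k-7\le m\le 8k-4$ (so $m=8(k-1)+r$), $X+m$ is divisible by exactly $k^r2^{k-1}$ of the integers $u_n$ with $n\le x_m$ and by exactly $2^{k-1}$ of the integers $v_n$ with $n\le y_m$.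
   Context: $\{n_\ell\}_{\ell\ge1}$ is a strictly increasing sequence of positive odd integers, any two distinct terms of which are coprime, with $\sum_\ell 1/n_\ell<\infty$. $\mathcal{E}_1$ (resp. $\mathcal{E}_3$) is the set of terms $n_\ell$ congruent to $1$ (resp. $3$) modulo $4$, enumerated increasingly as $u_1<u_2<\cdots$ (resp. $v_1<v_2<\cdots$). *)

theory Defs
  imports "HOL-Analysis.Analysis" "HOL-Library.Infinite_Set"
begin

text \<open>The sequence n_l is indexed by l >= 1 (the value n 0 is irrelevant).\<close>

definition E1 :: "(nat \<Rightarrow> nat) \<Rightarrow> nat set" where
  "E1 n = {n l | l. l \<ge> 1 \<and> n l mod 4 = 1}"

definition E3 :: "(nat \<Rightarrow> nat) \<Rightarrow> nat set" where
  "E3 n = {n l | l. l \<ge> 1 \<and> n l mod 4 = 3}"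

text \<open>Increasing enumerations u_1 < u_2 < ... and v_1 < v_2 < ... (indices start at 1).\<close>

definition useq :: "(nat \<Rightarrow> nat) \<Rightarrow> nat \<Rightarrow> nat" where
  "useq n j = enumerate (E1 n) (j - 1)"

definition vseq :: "(nat \<Rightarrow> nat) \<Rightarrow> nat \<Rightarrow> nat" where
  "vseq n j = enumerate (E3 n) (j - 1)"

end

theory Submission
  imports Defs
begin

lemma pow8: "q \<ge> 6 \<Longrightarrow> 8 * q < (2::nat) ^ q"
proof (induction q rule: dec_induct)
  case base then show ?case by simp
next
  case (step q) then show ?case by simp
qed

lemma bound65: "(m::nat) - 65 < 2 ^ ((m - 1) div 8)"
proof (cases "m \<le> 65")
  case True then show ?thesis by simp
next
  case False
  define q where "q = (m - 1) div 8"
  have q8: "q \<ge> 8" using False unfolding q_def by linarith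
  have "m - 1 < 8 * q + 8" unfolding q_def by linarith
  then have "m - 65 < 8 * q" using False by linarith
  also have "\<dots> < 2 ^ q" using pow8[of q] q8 by simp
  finally show ?thesis unfolding q_def .
qed

definition Dset :: "(nat \<Rightarrow> nat) \<Rightarrow> (nat \<Rightarrow> nat) \<Rightarrow> nat \<Rightarrow> nat set" where
  "Dset w f m = {j \<in> {1..f (m-1)}. \<exists>i\<in>{1..m-1}. f (i-1) < j \<and> j \<le> f i \<and> int (w j) dvd int m - int i}"

primrec FF :: "(nat \<Rightarrow> nat) \<Rightarrow> (nat \<Rightarrow> nat) \<Rightarrow> nat \<Rightarrow> nat \<Rightarrow> nat" where
  "FF w T 0 = (\<lambda>_. 0)"
| "FF w T (Suc m) = (FF w T m)(Suc m := FF w T m m + (T (Suc m) - card (Dset w (FF w T m) (Suc m))))"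

lemma FF_stable: "i \<le> m \<Longrightarrow> FF w T m i = FF w T i i"
proof (induction m)
  case 0 then show ?case by simp
next
  case (Suc m)
  show ?case
  proof (cases "i = Suc m")
    case True then show ?thesis by simp
  next
    case False then have "i \<le> m" using Suc.prems by simp
    then show ?thesis using Suc.IH False by simp
  qed
qed

lemma Dset_cong: "(\<And>i. i \<le> m \<Longrightarrow> f i = g i) \<Longrightarrow> Dset w f (Suc m) = Dset w g (Suc m)"
  unfolding Dset_def
  apply (rule Collect_cong)
  apply (rule conj_cong)
   apply simp
  apply (rule bex_cong)
   apply simp
  apply (subgoal_tac "i - 1 \<le> m \<and> i \<le> m")
   apply simp
  apply auto
  done

lemma block_exists:
  fixes x :: "nat \<Rightarrow> nat"
  assumes x0: "x 0 = 0" and mono: "\<And>i. x i < x (Suc i)"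
  shows "1 \<le> j \<Longrightarrow> j \<le> x p \<Longrightarrow> \<exists>i\<in>{1..p}. x (i-1) < j \<and> j \<le> x i"
proof (induction p)
  case 0 then show ?case using x0 by simp
next
  case (Suc p)
  show ?case
  proof (cases "j \<le> x p")
    case True then obtain i where "i\<in>{1..p}" "x (i-1) < j \<and> j \<le> x i" using Suc by blast
    then show ?thesis by (intro bexI[of _ i]) auto
  next
    case False then show ?thesis using Suc.prems by (intro bexI[of _ "Suc p"]) auto
  qed
qed

lemma Dset_card:
  assumes w: "\<And>j. j \<ge> 1 \<Longrightarrow> w j \<ge> 64 + j"
  shows "card (Dset w f m) \<le> m - 65"
proof -
  have "Dset w f m \<subseteq> {1..m - 65}"
  proof
    fix j assume j: "j \<in> Dset w f m"
    then obtain i where i: "i \<in> {1..m-1}" "int (w j) dvd int m - int i" and j1: "j \<ge> 1"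
      unfolding Dset_def by auto
    have pos: "int m - int i > 0" using i(1) by auto
    have "int (w j) \<le> int m - int i" using zdvd_imp_le[OF i(2) pos] .
    then have "w j \<le> m - 1" using i(1) by auto
    then show "j \<in> {1..m-65}" using w[OF j1] j1 by auto
  qed
  then show ?thesis by (metis card_atLeastAtMost card_mono finite_atLeastAtMost diff_Suc_1 le_trans diff_le_self)
qed

lemma main_gen:
  fixes w T :: "nat \<Rightarrow> nat" and M :: nat
  assumes w: "\<And>j. j \<ge> 1 \<Longrightarrow> w j \<ge> 64 + j"
    and T: "\<And>m. m \<ge> 1 \<Longrightarrow> 2 ^ ((m-1) div 8) \<le> T m"
  shows "\<exists>x. x 0 = 0 \<and> (\<forall>i. x i < x (Suc i)) \<and>
    (\<forall>X::int. (\<forall>m\<in>{1..M}. \<forall>j\<in>{x (m-1)<..x m}. int (w j) dvd X + int m) \<longrightarrow>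
      (\<forall>m\<in>{1..M}. card {j\<in>{1..x m}. int (w j) dvd X + int m} = T m))"
proof -
  define x where "x = (\<lambda>i. FF w T i i)"
  have x0: "x 0 = 0" unfolding x_def by simp
  have xs: "x (Suc m) = x m + (T (Suc m) - card (Dset w x (Suc m)))" for m
  proof -
    have "Dset w (FF w T m) (Suc m) = Dset w x (Suc m)"
      by (rule Dset_cong) (unfold x_def, erule FF_stable)
    moreover have "FF w T m m = x m" unfolding x_def ..
    ultimately show ?thesis unfolding x_def by simp
  qed
  have cardlt: "card (Dset w x m) < T m" if "m \<ge> 1" for m
    using Dset_card[OF w, of x m] bound65[of m] T[OF that] by linarith
  have mono: "x i < x (Suc i)" for i using xs[of i] cardlt[of "Suc i"] by simp
  have xm: "x m = x (m-1) + (T m - card (Dset w x m))" if "m \<ge> 1" for m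
    using xs[of "m-1"] that by simp
  show ?thesis
  proof (intro exI[of _ x] conjI allI impI ballI)
    show "x 0 = 0" by (rule x0)
    show "x i < x (Suc i)" for i by (rule mono)
  next
    fix X :: int and m
    assume H: "\<forall>m\<in>{1..M}. \<forall>j\<in>{x (m-1)<..x m}. int (w j) dvd X + int m"
    assume m: "m \<in> {1..M}"
    have le: "x (m-1) \<le> x m" using mono[of "m-1"] m by simp
    have eq: "{j\<in>{1..x m}. int (w j) dvd X + int m} = {x (m-1)<..x m} \<union> Dset w x m"
    proof (intro equalityI subsetI)
      fix j assume j: "j \<in> {j\<in>{1..x m}. int (w j) dvd X + int m}"
      show "j \<in> {x (m-1)<..x m} \<union> Dset w x m"
      proof (cases "j > x (m-1)")
        case True then show ?thesis using j by auto
      next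
        case False
        then have j1: "1 \<le> j" "j \<le> x (m-1)" using j by auto
        obtain i where i: "i\<in>{1..m-1}" "x (i-1) < j" "j \<le> x i"
          using block_exists[OF x0 mono j1] by blast
        have "i \<in> {1..M}" using i m by auto
        then have "int (w j) dvd X + int i" using H i by auto
        moreover have "int (w j) dvd X + int m" using j by simp
        ultimately have "int (w j) dvd (X + int m) - (X + int i)" by (rule dvd_diff[rotated])
        then have "int (w j) dvd int m - int i" by simp
        then have "j \<in> Dset w x m" unfolding Dset_def using j1 i by auto
        then show ?thesis by simp
      qed
    next
      fix j assume j: "j \<in> {x (m-1)<..x m} \<union> Dset w x m"
      show "j \<in> {j\<in>{1..x m}. int (w j) dvd X + int m}"
      proof (cases "j \<in> {x (m-1)<..x m}")
        case True then show ?thesis using H m by auto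
      next
        case False
        then have jD: "j \<in> Dset w x m" using j by blast
        then obtain i where i: "i\<in>{1..m-1}" "x (i-1) < j" "j \<le> x i" "int (w j) dvd int m - int i"
          and j1: "1 \<le> j" "j \<le> x (m-1)" unfolding Dset_def by auto
        have "i \<in> {1..M}" using i m by auto
        then have "int (w j) dvd X + int i" using H i by auto
        then have "int (w j) dvd (X + int i) + (int m - int i)" using i(4) by (rule dvd_add)
        then show ?thesis using j1 le by simp
      qed
    qed
    have disj: "{x (m-1)<..x m} \<inter> Dset w x m = {}" unfolding Dset_def by auto
    have fD: "finite (Dset w x m)" unfolding Dset_def by auto
    have "card ({x (m-1)<..x m} \<union> Dset w x m) = (x m - x (m-1)) + card (Dset w x m)"
      by (subst card_Un_disjoint) (use disj fD in auto)
    also have "\<dots> = T m" using xm[of m] m cardlt[of m] by simp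
    finally show "card {j\<in>{1..x m}. int (w j) dvd X + int m} = T m" using eq by simp
  qed
qed


lemma enum_ge:
  assumes "infinite S" and "\<And>a. a \<in> S \<Longrightarrow> a > 64"
  shows "enumerate S i \<ge> 65 + i"
proof (induction i)
  case 0 then show ?case using assms enumerate_in_set[OF assms(1), of 0] by force
next
  case (Suc i)
  have "enumerate S i < enumerate S (Suc i)"
    using strict_mono_enumerate[OF assms(1)] by (simp add: strict_mono_def)
  then show ?case using Suc by simp
qed

lemma useq_ge:
  assumes "infinite (E1 n)" "\<And>l. l \<ge> 1 \<Longrightarrow> n l > 64" "j \<ge> 1"
  shows "useq n j \<ge> 64 + j"
proof -
  have "enumerate (E1 n) (j-1) \<ge> 65 + (j-1)"
    by (rule enum_ge[OF assms(1)]) (auto simp: E1_def assms(2))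
  then show ?thesis using assms(3) unfolding useq_def by simp
qed

lemma vseq_ge:
  assumes "infinite (E3 n)" "\<And>l. l \<ge> 1 \<Longrightarrow> n l > 64" "j \<ge> 1"
  shows "vseq n j \<ge> 64 + j"
proof -
  have "enumerate (E3 n) (j-1) \<ge> 65 + (j-1)"
    by (rule enum_ge[OF assms(1)]) (auto simp: E3_def assms(2))
  then show ?thesis using assms(3) unfolding vseq_def by simp
qed

lemma divq: assumes "k \<ge> 2" "8*k-7 \<le> m" "m \<le> 8*k-4" shows "(m-1) div 8 = k - (1::nat)"
proof (rule div_nat_eqI)
  show "8 * (k - 1) \<le> m - 1" using assms by linarith
  have "Suc (k - 1) = k" using assms by simp
  then show "m - 1 < 8 * Suc (k - 1)" using assms by simp
qed

definition TUf :: "nat \<Rightarrow> nat \<Rightarrow> nat" where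
  "TUf k m = (if m \<le> 8*k-8 then 2 ^ ((m-1) div 8) else if m \<le> 8*k-4 then k ^ (m - 8*(k-1)) * 2 ^ (k-1) else 2 ^ ((m-1) div 8))"

definition TVf :: "nat \<Rightarrow> nat \<Rightarrow> nat" where
  "TVf k m = (if m \<le> 8*k-8 then 2 ^ ((m-1) div 8) else if m \<le> 8*k-4 then 2 ^ (k-1) else 2 ^ ((m-1) div 8))"

lemma TUf_ge: assumes k2: "k \<ge> 2" and "m \<ge> 1" shows "2 ^ ((m-1) div 8) \<le> TUf k m"
proof (cases "m \<le> 8*k-8 \<or> m > 8*k-4")
  case True
  then have "TUf k m = 2 ^ ((m-1) div 8)" unfolding TUf_def by auto
  then show ?thesis by simp
next
  case False
  then have "8*k-7 \<le> m" "m \<le> 8*k-4" using k2 by auto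
  then have d: "(m-1) div 8 = k-1" using divq[OF k2] by simp
  have e: "TUf k m = k ^ (m - 8*(k-1)) * 2 ^ (k-1)" unfolding TUf_def using False by simp
  have "1 \<le> k ^ (m - 8*(k-1))" using k2 by simp
  then have "1 * 2 ^ (k-1) \<le> k ^ (m - 8*(k-1)) * 2 ^ (k-1)" by (rule mult_le_mono1)
  then show ?thesis using d e by simp
qed

lemma TVf_ge: assumes k2: "k \<ge> 2" and "m \<ge> 1" shows "2 ^ ((m-1) div 8) \<le> TVf k m"
proof (cases "m \<le> 8*k-8 \<or> m > 8*k-4")
  case True
  then have "TVf k m = 2 ^ ((m-1) div 8)" unfolding TVf_def by auto
  then show ?thesis by simp
next
  case False
  then have "8*k-7 \<le> m" "m \<le> 8*k-4" using k2 by auto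
  then have d: "(m-1) div 8 = k-1" using divq[OF k2] by simp
  have e: "TVf k m = 2 ^ (k-1)" unfolding TVf_def using False by simp
  then show ?thesis using d e by simp
qed

lemma finalC:
  fixes cU cV :: "nat \<Rightarrow> nat"
  assumes k2: "k \<ge> 2"
    and cu: "\<forall>m\<in>{1..8*k-4}. cU m = TUf k m"
    and cv: "\<forall>m\<in>{1..8*k-4}. cV m = TVf k m"
  shows "(\<forall>m \<in> {1..8*k-8}. cU m = 2 ^ ((m - 1) div 8) \<and> cV m = 2 ^ ((m - 1) div 8)) \<and>
         (\<forall>m \<in> {8*k-7..8*k-4}. cU m = k ^ (m - 8*(k-1)) * 2 ^ (k-1) \<and> cV m = 2 ^ (k-1))"
proof (intro conjI ballI)
  fix m assume m: "m \<in> {1..8*k-8}"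
  then have m': "m \<in> {1..8*k-4}" "m \<le> 8*k-8" by auto
  show "cU m = 2 ^ ((m - 1) div 8)" using cu m' by (simp add: TUf_def)
  show "cV m = 2 ^ ((m - 1) div 8)" using cv m' by (simp add: TVf_def)
next
  fix m assume m: "m \<in> {8*k-7..8*k-4}"
  then have m': "m \<in> {1..8*k-4}" "\<not> m \<le> 8*k-8" "m \<le> 8*k-4" using k2 by auto
  show "cU m = k ^ (m - 8*(k-1)) * 2 ^ (k-1)" using cu m' by (simp add: TUf_def)
  show "cV m = 2 ^ (k-1)" using cv m' by (simp add: TVf_def)
qed

lemma prod_split:
  fixes u v :: "nat \<Rightarrow> nat" and x y :: "nat \<Rightarrow> nat" and X :: int
  assumes H: "\<forall>m \<in> {1..M}. int ((\<Prod>j\<in>{x (m-1)<..x m}. u j) * (\<Prod>j\<in>{y (m-1)<..y m}. v j)) dvd X + int m"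
  shows "\<forall>m\<in>{1..M}. \<forall>j\<in>{x (m-1)<..x m}. int (u j) dvd X + int m"
    and "\<forall>m\<in>{1..M}. \<forall>j\<in>{y (m-1)<..y m}. int (v j) dvd X + int m"
proof (intro ballI)
  fix m j assume m: "m \<in> {1..M}" and j: "j \<in> {x (m-1)<..x m}"
  have "u j dvd (\<Prod>j\<in>{x (m-1)<..x m}. u j)" using j by (intro dvd_prodI) auto
  then have "u j dvd (\<Prod>j\<in>{x (m-1)<..x m}. u j) * (\<Prod>j\<in>{y (m-1)<..y m}. v j)" by (rule dvd_mult2)
  then have "int (u j) dvd int ((\<Prod>j\<in>{x (m-1)<..x m}. u j) * (\<Prod>j\<in>{y (m-1)<..y m}. v j))"
    by (simp only: of_nat_dvd_iff)
  then show "int (u j) dvd X + int m" using bspec[OF H m] by (rule dvd_trans)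
next
  show "\<forall>m\<in>{1..M}. \<forall>j\<in>{y (m-1)<..y m}. int (v j) dvd X + int m"
  proof (intro ballI)
    fix m j assume m: "m \<in> {1..M}" and j: "j \<in> {y (m-1)<..y m}"
    have "v j dvd (\<Prod>j\<in>{y (m-1)<..y m}. v j)" using j by (intro dvd_prodI) auto
    then have "v j dvd (\<Prod>j\<in>{x (m-1)<..x m}. u j) * (\<Prod>j\<in>{y (m-1)<..y m}. v j)" by (rule dvd_mult)
    then have "int (v j) dvd int ((\<Prod>j\<in>{x (m-1)<..x m}. u j) * (\<Prod>j\<in>{y (m-1)<..y m}. v j))"
      by (simp only: of_nat_dvd_iff)
    then show "int (v j) dvd X + int m" using bspec[OF H m] by (rule dvd_trans)
  qed
qed

theorem lemma1:
  fixes n :: "nat \<Rightarrow> nat" and k :: nat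
  assumes incr: "\<And>l. l \<ge> 1 \<Longrightarrow> n l < n (Suc l)"
    and pos: "\<And>l. l \<ge> 1 \<Longrightarrow> n l > 0"
    and odd: "\<And>l. l \<ge> 1 \<Longrightarrow> odd (n l)"
    and copr: "\<And>l l'. l \<ge> 1 \<Longrightarrow> l' \<ge> 1 \<Longrightarrow> l \<noteq> l' \<Longrightarrow> coprime (n l) (n l')"
    and summ: "summable (\<lambda>l. 1 / real (n (Suc l)))"
    and inf1: "infinite (E1 n)"
    and inf3: "infinite (E3 n)"
    and big: "\<And>l. l \<ge> 1 \<Longrightarrow> n l > 64"
    and k2: "k \<ge> 2"
  shows "\<exists>x y :: nat \<Rightarrow> nat.
    x 0 = 0 \<and> y 0 = 0 \<and>
    (\<forall>i < 8*k-4. x i < x (Suc i) \<and> y i < y (Suc i)) \<and>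
    (\<forall>X :: int.
       (X mod 4 = 0 \<and>
        (\<forall>m \<in> {1..8*k-4}.
           int ((\<Prod>j\<in>{x (m-1)<..x m}. useq n j) * (\<Prod>j\<in>{y (m-1)<..y m}. vseq n j))
             dvd X + int m))
       \<longrightarrow>
       (\<forall>m \<in> {1..8*k-8}.
          card {j \<in> {1..x m}. int (useq n j) dvd X + int m} = 2 ^ ((m - 1) div 8) \<and>
          card {j \<in> {1..y m}. int (vseq n j) dvd X + int m} = 2 ^ ((m - 1) div 8)) \<and>
       (\<forall>m \<in> {8*k-7..8*k-4}.
          card {j \<in> {1..x m}. int (useq n j) dvd X + int m} = k ^ (m - 8*(k-1)) * 2 ^ (k-1) \<and>
          card {j \<in> {1..y m}. int (vseq n j) dvd X + int m} = 2 ^ (k-1)))"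
proof -
  obtain x where x0: "x 0 = 0" and xm: "\<forall>i. x i < x (Suc i)" and
    xc: "\<forall>X::int. (\<forall>m\<in>{1..8*k-4}. \<forall>j\<in>{x (m-1)<..x m}. int (useq n j) dvd X + int m) \<longrightarrow>
      (\<forall>m\<in>{1..8*k-4}. card {j\<in>{1..x m}. int (useq n j) dvd X + int m} = TUf k m)"
    using main_gen[of "useq n" "TUf k" "8*k-4", OF useq_ge[OF inf1 big] TUf_ge[OF k2]] by blast
  obtain y where y0: "y 0 = 0" and ym: "\<forall>i. y i < y (Suc i)" and
    yc: "\<forall>X::int. (\<forall>m\<in>{1..8*k-4}. \<forall>j\<in>{y (m-1)<..y m}. int (vseq n j) dvd X + int m) \<longrightarrow>
      (\<forall>m\<in>{1..8*k-4}. card {j\<in>{1..y m}. int (vseq n j) dvd X + int m} = TVf k m)"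
    using main_gen[of "vseq n" "TVf k" "8*k-4", OF vseq_ge[OF inf3 big] TVf_ge[OF k2]] by blast
  have A: "\<forall>i<8 * k - 4. x i < x (Suc i) \<and> y i < y (Suc i)" using xm ym by simp
  have B: "(\<forall>m \<in> {1..8*k-8}.
          card {j \<in> {1..x m}. int (useq n j) dvd X + int m} = 2 ^ ((m - 1) div 8) \<and>
          card {j \<in> {1..y m}. int (vseq n j) dvd X + int m} = 2 ^ ((m - 1) div 8)) \<and>
       (\<forall>m \<in> {8*k-7..8*k-4}.
          card {j \<in> {1..x m}. int (useq n j) dvd X + int m} = k ^ (m - 8*(k-1)) * 2 ^ (k-1) \<and>
          card {j \<in> {1..y m}. int (vseq n j) dvd X + int m} = 2 ^ (k-1))"
    if H: "X mod 4 = 0 \<and>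
        (\<forall>m \<in> {1..8*k-4}.
           int ((\<Prod>j\<in>{x (m-1)<..x m}. useq n j) * (\<Prod>j\<in>{y (m-1)<..y m}. vseq n j))
             dvd X + int m)" for X :: int
  proof -
    have Hp: "\<forall>m \<in> {1..8*k-4}.
           int ((\<Prod>j\<in>{x (m-1)<..x m}. useq n j) * (\<Prod>j\<in>{y (m-1)<..y m}. vseq n j))
             dvd X + int m" using H by (rule conjunct2)
    have cu: "\<forall>m\<in>{1..8*k-4}. card {j\<in>{1..x m}. int (useq n j) dvd X + int m} = TUf k m"
      by (rule mp[OF spec[OF xc] prod_split(1)[OF Hp]])
    have cv: "\<forall>m\<in>{1..8*k-4}. card {j\<in>{1..y m}. int (vseq n j) dvd X + int m} = TVf k m"
      by (rule mp[OF spec[OF yc] prod_split(2)[OF Hp]])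
    show ?thesis
      by (rule finalC[where cU = "\<lambda>m. card {j\<in>{1..x m}. int (useq n j) dvd X + int m}"
            and cV = "\<lambda>m. card {j\<in>{1..y m}. int (vseq n j) dvd X + int m}", OF k2 cu cv])
  qed
  show ?thesis
    apply (rule exI[of _ x], rule exI[of _ y], rule conjI[OF x0], rule conjI[OF y0], rule conjI[OF A])
    apply (rule allI, rule impI)
    apply (erule B)
    done
qed

end
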